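(* Let $c\in C^\infty(\mathbb R)$ and let $u$ satisfy $u_t=uu_1+\hbar^2c(u)u_1^3$ (with $u_k=\partial_x^ku$). Define the polynomial Miura map $$\begin{aligned}v={}&u-\hbar^2cu_1^2+\hbar^4\Big(\tfrac43cc'u_1^4+2c^2u_1^2u_2\Big)\\&+\hbar^6\Big(-\tfrac{28}{15}c{c'}^2u_1^6-\tfrac{14}{15}c^2c''u_1^6-\tfrac{26}{3}c^2c'u_1^4u_2-4c^3u_1^2u_2^2-\tfrac43c^3u_1^3u_3\Big)\\&+\hbar^8\Big(\tfrac{836}{315}c{c'}^3u_1^8+\tfrac{1268}{315}c^2c'c''u_1^8+\tfrac{16}{35}c^3c'''u_1^8+\tfrac{1138}{45}c^2{c'}^2u_1^6u_2+\tfrac{128}{15}c^3c''u_1^6u_2\\&\qquad+\tfrac{112}{3}c^3c'u_1^4u_2^2+8c^4u_1^2u_2^3+8c^3c'u_1^5u_3+8c^4u_1^3u_2u_3+\tfrac23c^4u_1^4u_4\Big),\end{aligned}$$ where $c$ and its derivatives are evaluated at $u$. Then $v_t-vv_x=O(\hbar^{10})$ as a formal expansion in $\hbar$; i.e. the equation $u_t=uu_x+\hbar^2c(u)u_x^3$ is trivial (polynomially Miura-equivalent to the Monge equation $v_t=vv_x$) up to $O(\hbar^8)$.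
   Context: $\hbar$ is a formal parameter; primes on $c$ denote derivatives with respect to $u$; $v_t$ is computed by the chain rule using the evolution equation for $u$. *)

theory Defs
  imports "HOL-Analysis.Analysis" "HOL-Library.Landau_Symbols"
begin

definition smooth :: "(real \<Rightarrow> real) \<Rightarrow> bool" where
  "smooth f \<longleftrightarrow> (\<forall>k x. ((deriv ^^ k) f) differentiable (at x))"

definition flow :: "(real \<Rightarrow> real) \<Rightarrow> real \<Rightarrow> (real \<Rightarrow> real) \<Rightarrow> real \<Rightarrow> real" where
  "flow c h w x = w x * deriv w x + h^2 * c (w x) * (deriv w x)^3"

definition miura :: "(real \<Rightarrow> real) \<Rightarrow> real \<Rightarrow> (real \<Rightarrow> real) \<Rightarrow> real \<Rightarrow> real" where
  "miura c h w x =
    (let u = w x; u1 = (deriv ^^ 1) w x; u2 = (deriv ^^ 2) w x;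
         u3 = (deriv ^^ 3) w x; u4 = (deriv ^^ 4) w x;
         c0 = c u; c1 = (deriv ^^ 1) c u; c2 = (deriv ^^ 2) c u; c3 = (deriv ^^ 3) c u
     in u - h^2 * c0 * u1^2
        + h^4 * (4/3 * c0 * c1 * u1^4 + 2 * c0^2 * u1^2 * u2)
        + h^6 * (- 28/15 * c0 * c1^2 * u1^6 - 14/15 * c0^2 * c2 * u1^6
                 - 26/3 * c0^2 * c1 * u1^4 * u2 - 4 * c0^3 * u1^2 * u2^2
                 - 4/3 * c0^3 * u1^3 * u3)
        + h^8 * (836/315 * c0 * c1^3 * u1^8 + 1268/315 * c0^2 * c1 * c2 * u1^8
                 + 16/35 * c0^3 * c3 * u1^8 + 1138/45 * c0^2 * c1^2 * u1^6 * u2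
                 + 128/15 * c0^3 * c2 * u1^6 * u2 + 112/3 * c0^3 * c1 * u1^4 * u2^2
                 + 8 * c0^4 * u1^2 * u2^3 + 8 * c0^3 * c1 * u1^5 * u3
                 + 8 * c0^4 * u1^3 * u2 * u3 + 2/3 * c0^4 * u1^4 * u4))"

text \<open>v_t by the chain rule: the variation of v[u] in the direction of u_t = flow,
  i.e. d/ds v[u + s * flow] at s = 0.\<close>
definition miura_t :: "(real \<Rightarrow> real) \<Rightarrow> real \<Rightarrow> (real \<Rightarrow> real) \<Rightarrow> real \<Rightarrow> real" where
  "miura_t c h u x = deriv (\<lambda>s. miura c h (\<lambda>y. u y + s * flow c h u y) x) 0"

end

theory Submission
  imports Defs
begin

definition MP :: "real \<Rightarrow> real \<Rightarrow> real \<Rightarrow> real \<Rightarrow> real \<Rightarrow> real \<Rightarrow> real \<Rightarrow> real \<Rightarrow> real \<Rightarrow> real \<Rightarrow> real" where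
  "MP h c0 c1 c2 c3 u u1 u2 u3 u4 = u - h^2 * c0 * u1^2
        + h^4 * (4/3 * c0 * c1 * u1^4 + 2 * c0^2 * u1^2 * u2)
        + h^6 * (- 28/15 * c0 * c1^2 * u1^6 - 14/15 * c0^2 * c2 * u1^6
                 - 26/3 * c0^2 * c1 * u1^4 * u2 - 4 * c0^3 * u1^2 * u2^2
                 - 4/3 * c0^3 * u1^3 * u3)
        + h^8 * (836/315 * c0 * c1^3 * u1^8 + 1268/315 * c0^2 * c1 * c2 * u1^8
                 + 16/35 * c0^3 * c3 * u1^8 + 1138/45 * c0^2 * c1^2 * u1^6 * u2
                 + 128/15 * c0^3 * c2 * u1^6 * u2 + 112/3 * c0^3 * c1 * u1^4 * u2^2
                 + 8 * c0^4 * u1^2 * u2^3 + 8 * c0^3 * c1 * u1^5 * u3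
                 + 8 * c0^4 * u1^3 * u2 * u3 + 2/3 * c0^4 * u1^4 * u4)"

definition V0 :: "real \<Rightarrow> real \<Rightarrow> real \<Rightarrow> real \<Rightarrow> real \<Rightarrow> real \<Rightarrow> real \<Rightarrow> real \<Rightarrow> real \<Rightarrow> real \<Rightarrow> real \<Rightarrow> real" where
  "V0 c0 c1 c2 c3 c4 u0 u1 u2 u3 u4 u5 = (u0)"

definition V1 :: "real \<Rightarrow> real \<Rightarrow> real \<Rightarrow> real \<Rightarrow> real \<Rightarrow> real \<Rightarrow> real \<Rightarrow> real \<Rightarrow> real \<Rightarrow> real \<Rightarrow> real \<Rightarrow> real" where
  "V1 c0 c1 c2 c3 c4 u0 u1 u2 u3 u4 u5 = (- (u1^2 * c0))"

definition V2 :: "real \<Rightarrow> real \<Rightarrow> real \<Rightarrow> real \<Rightarrow> real \<Rightarrow> real \<Rightarrow> real \<Rightarrow> real \<Rightarrow> real \<Rightarrow> real \<Rightarrow> real \<Rightarrow> real" where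
  "V2 c0 c1 c2 c3 c4 u0 u1 u2 u3 u4 u5 = ((4/3) * u1^4 * c0 * c1 + 2 * u1^2 * u2 * c0^2)"

definition V3 :: "real \<Rightarrow> real \<Rightarrow> real \<Rightarrow> real \<Rightarrow> real \<Rightarrow> real \<Rightarrow> real \<Rightarrow> real \<Rightarrow> real \<Rightarrow> real \<Rightarrow> real \<Rightarrow> real" where
  "V3 c0 c1 c2 c3 c4 u0 u1 u2 u3 u4 u5 = (- ((14/15) * u1^6 * c0^2 * c2) - (28/15) * u1^6 * c0 * c1^2 - (26/3) * u1^4 * u2 * c0^2 * c1 - (4/3) * u1^3 * u3 * c0^3 - 4 * u1^2 * u2^2 * c0^3)"

definition V4 :: "real \<Rightarrow> real \<Rightarrow> real \<Rightarrow> real \<Rightarrow> real \<Rightarrow> real \<Rightarrow> real \<Rightarrow> real \<Rightarrow> real \<Rightarrow> real \<Rightarrow> real \<Rightarrow> real" where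
  "V4 c0 c1 c2 c3 c4 u0 u1 u2 u3 u4 u5 = ((16/35) * u1^8 * c0^3 * c3 + (1268/315) * u1^8 * c0^2 * c1 * c2 + (836/315) * u1^8 * c0 * c1^3 + (128/15) * u1^6 * u2 * c0^3 * c2 + (1138/45) * u1^6 * u2 * c0^2 * c1^2 + 8 * u1^5 * u3 * c0^3 * c1 + (112/3) * u1^4 * u2^2 * c0^3 * c1 + (2/3) * u1^4 * u4 * c0^4 + 8 * u1^3 * u2 * u3 * c0^4 + 8 * u1^2 * u2^3 * c0^4)"

definition W0 :: "real \<Rightarrow> real \<Rightarrow> real \<Rightarrow> real \<Rightarrow> real \<Rightarrow> real \<Rightarrow> real \<Rightarrow> real \<Rightarrow> real \<Rightarrow> real \<Rightarrow> real \<Rightarrow> real" where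
  "W0 c0 c1 c2 c3 c4 u0 u1 u2 u3 u4 u5 = (u1)"

definition W1 :: "real \<Rightarrow> real \<Rightarrow> real \<Rightarrow> real \<Rightarrow> real \<Rightarrow> real \<Rightarrow> real \<Rightarrow> real \<Rightarrow> real \<Rightarrow> real \<Rightarrow> real \<Rightarrow> real" where
  "W1 c0 c1 c2 c3 c4 u0 u1 u2 u3 u4 u5 = (- (u1^3 * c1) - 2 * u1 * u2 * c0)"

definition W2 :: "real \<Rightarrow> real \<Rightarrow> real \<Rightarrow> real \<Rightarrow> real \<Rightarrow> real \<Rightarrow> real \<Rightarrow> real \<Rightarrow> real \<Rightarrow> real \<Rightarrow> real \<Rightarrow> real" where
  "W2 c0 c1 c2 c3 c4 u0 u1 u2 u3 u4 u5 = ((4/3) * u1^5 * c0 * c2 + (4/3) * u1^5 * c1^2 + (28/3) * u1^3 * u2 * c0 * c1 + 2 * u1^2 * u3 * c0^2 + 4 * u1 * u2^2 * c0^2)"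

definition W3 :: "real \<Rightarrow> real \<Rightarrow> real \<Rightarrow> real \<Rightarrow> real \<Rightarrow> real \<Rightarrow> real \<Rightarrow> real \<Rightarrow> real \<Rightarrow> real \<Rightarrow> real \<Rightarrow> real" where
  "W3 c0 c1 c2 c3 c4 u0 u1 u2 u3 u4 u5 = (- ((14/15) * u1^7 * c0^2 * c3) - (28/5) * u1^7 * c0 * c1 * c2 - (28/15) * u1^7 * c1^3 - (214/15) * u1^5 * u2 * c0^2 * c2 - (428/15) * u1^5 * u2 * c0 * c1^2 - (38/3) * u1^4 * u3 * c0^2 * c1 - (140/3) * u1^3 * u2^2 * c0^2 * c1 - (4/3) * u1^3 * u4 * c0^3 - 12 * u1^2 * u2 * u3 * c0^3 - 8 * u1 * u2^3 * c0^3)"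

definition W4 :: "real \<Rightarrow> real \<Rightarrow> real \<Rightarrow> real \<Rightarrow> real \<Rightarrow> real \<Rightarrow> real \<Rightarrow> real \<Rightarrow> real \<Rightarrow> real \<Rightarrow> real \<Rightarrow> real" where
  "W4 c0 c1 c2 c3 c4 u0 u1 u2 u3 u4 u5 = ((16/35) * u1^9 * c0^3 * c4 + (340/63) * u1^9 * c0^2 * c1 * c3 + (1268/315) * u1^9 * c0^2 * c2^2 + (5044/315) * u1^9 * c0 * c1^2 * c2 + (836/315) * u1^9 * c1^4 + (256/21) * u1^7 * u2 * c0^3 * c3 + (2276/21) * u1^7 * u2 * c0^2 * c1 * c2 + (1508/21) * u1^7 * u2 * c0 * c1^3 + (248/15) * u1^6 * u3 * c0^3 * c2 + (2218/45) * u1^6 * u3 * c0^2 * c1^2 + (1328/15) * u1^5 * u2^2 * c0^3 * c2 + (3956/15) * u1^5 * u2^2 * c0^2 * c1^2 + (32/3) * u1^5 * u4 * c0^3 * c1 + (440/3) * u1^4 * u2 * u3 * c0^3 * c1 + (2/3) * u1^4 * u5 * c0^4 + (544/3) * u1^3 * u2^3 * c0^3 * c1 + (32/3) * u1^3 * u2 * u4 * c0^4 + 8 * u1^3 * u3^2 * c0^4 + 48 * u1^2 * u2^2 * u3 * c0^4 + 16 * u1 * u2^4 * c0^4)"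

definition T0 :: "real \<Rightarrow> real \<Rightarrow> real \<Rightarrow> real \<Rightarrow> real \<Rightarrow> real \<Rightarrow> real \<Rightarrow> real \<Rightarrow> real \<Rightarrow> real \<Rightarrow> real \<Rightarrow> real" where
  "T0 c0 c1 c2 c3 c4 u0 u1 u2 u3 u4 u5 = (u0 * u1)"

definition T1 :: "real \<Rightarrow> real \<Rightarrow> real \<Rightarrow> real \<Rightarrow> real \<Rightarrow> real \<Rightarrow> real \<Rightarrow> real \<Rightarrow> real \<Rightarrow> real \<Rightarrow> real \<Rightarrow> real" where
  "T1 c0 c1 c2 c3 c4 u0 u1 u2 u3 u4 u5 = (- (u0 * u1^3 * c1) - 2 * u0 * u1 * u2 * c0 - u1^3 * c0)"

definition T2 :: "real \<Rightarrow> real \<Rightarrow> real \<Rightarrow> real \<Rightarrow> real \<Rightarrow> real \<Rightarrow> real \<Rightarrow> real \<Rightarrow> real \<Rightarrow> real \<Rightarrow> real \<Rightarrow> real" where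
  "T2 c0 c1 c2 c3 c4 u0 u1 u2 u3 u4 u5 = ((4/3) * u0 * u1^5 * c0 * c2 + (4/3) * u0 * u1^5 * c1^2 + (28/3) * u0 * u1^3 * u2 * c0 * c1 + 2 * u0 * u1^2 * u3 * c0^2 + 4 * u0 * u1 * u2^2 * c0^2 + (7/3) * u1^5 * c0 * c1 + 4 * u1^3 * u2 * c0^2)"

definition T3 :: "real \<Rightarrow> real \<Rightarrow> real \<Rightarrow> real \<Rightarrow> real \<Rightarrow> real \<Rightarrow> real \<Rightarrow> real \<Rightarrow> real \<Rightarrow> real \<Rightarrow> real \<Rightarrow> real" where
  "T3 c0 c1 c2 c3 c4 u0 u1 u2 u3 u4 u5 = (- ((14/15) * u0 * u1^7 * c0^2 * c3) - (28/5) * u0 * u1^7 * c0 * c1 * c2 - (28/15) * u0 * u1^7 * c1^3 - (214/15) * u0 * u1^5 * u2 * c0^2 * c2 - (428/15) * u0 * u1^5 * u2 * c0 * c1^2 - (38/3) * u0 * u1^4 * u3 * c0^2 * c1 - (140/3) * u0 * u1^3 * u2^2 * c0^2 * c1 - (4/3) * u0 * u1^3 * u4 * c0^3 - 12 * u0 * u1^2 * u2 * u3 * c0^3 - 8 * u0 * u1 * u2^3 * c0^3 - (34/15) * u1^7 * c0^2 * c2 - (68/15) * u1^7 * c0 * c1^2 - (68/3) * u1^5 * u2 * c0^2 * c1 - (10/3) * u1^4 * u3 * c0^3 - 12 * u1^3 * u2^2 * c0^3)"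

definition T4 :: "real \<Rightarrow> real \<Rightarrow> real \<Rightarrow> real \<Rightarrow> real \<Rightarrow> real \<Rightarrow> real \<Rightarrow> real \<Rightarrow> real \<Rightarrow> real \<Rightarrow> real \<Rightarrow> real" where
  "T4 c0 c1 c2 c3 c4 u0 u1 u2 u3 u4 u5 = ((16/35) * u0 * u1^9 * c0^3 * c4 + (340/63) * u0 * u1^9 * c0^2 * c1 * c3 + (1268/315) * u0 * u1^9 * c0^2 * c2^2 + (5044/315) * u0 * u1^9 * c0 * c1^2 * c2 + (836/315) * u0 * u1^9 * c1^4 + (256/21) * u0 * u1^7 * u2 * c0^3 * c3 + (2276/21) * u0 * u1^7 * u2 * c0^2 * c1 * c2 + (1508/21) * u0 * u1^7 * u2 * c0 * c1^3 + (248/15) * u0 * u1^6 * u3 * c0^3 * c2 + (2218/45) * u0 * u1^6 * u3 * c0^2 * c1^2 + (1328/15) * u0 * u1^5 * u2^2 * c0^3 * c2 + (3956/15) * u0 * u1^5 * u2^2 * c0^2 * c1^2 + (32/3) * u0 * u1^5 * u4 * c0^3 * c1 + (440/3) * u0 * u1^4 * u2 * u3 * c0^3 * c1 + (2/3) * u0 * u1^4 * u5 * c0^4 + (544/3) * u0 * u1^3 * u2^3 * c0^3 * c1 + (32/3) * u0 * u1^3 * u2 * u4 * c0^4 + 8 * u0 * u1^3 * u3^2 * c0^4 + 48 * u0 * u1^2 * u2^2 * u3 * c0^4 + 16 * u0 * u1 * u2^4 * c0^4 + (146/105) * u1^9 * c0^3 * c3 + (3886/315) * u1^9 * c0^2 *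 c1 * c2 + (2572/315) * u1^9 * c0 * c1^3 + (82/3) * u1^7 * u2 * c0^3 * c2 + (244/3) * u1^7 * u2 * c0^2 * c1^2 + (74/3) * u1^6 * u3 * c0^3 * c1 + (388/3) * u1^5 * u2^2 * c0^3 * c1 + 2 * u1^5 * u4 * c0^4 + (80/3) * u1^4 * u2 * u3 * c0^4 + 32 * u1^3 * u2^3 * c0^4)"

definition T5 :: "real \<Rightarrow> real \<Rightarrow> real \<Rightarrow> real \<Rightarrow> real \<Rightarrow> real \<Rightarrow> real \<Rightarrow> real \<Rightarrow> real \<Rightarrow> real \<Rightarrow> real \<Rightarrow> real" where
  "T5 c0 c1 c2 c3 c4 u0 u1 u2 u3 u4 u5 = ((118/105) * u1^11 * c0^4 * c4 + (5372/315) * u1^11 * c0^3 * c1 * c3 + (3956/315) * u1^11 * c0^3 * c2^2 + (7718/105) * u1^11 * c0^2 * c1^2 * c2 + (836/35) * u1^11 * c0 * c1^4 + (4148/105) * u1^9 * u2 * c0^4 * c3 + (143132/315) * u1^9 * u2 * c0^3 * c1 * c2 + (15506/35) * u1^9 * u2 * c0^2 * c1^3 + (844/15) * u1^8 * u3 * c0^4 * c2 + (3298/15) * u1^8 * u3 * c0^3 * c1^2 + (6182/15) * u1^7 * u2^2 * c0^4 * c2 + (24104/15) * u1^7 * u2^2 * c0^3 * c1^2 + 38 * u1^7 * u4 * c0^4 * c1 + 748 * u1^6 * u2 * u3 * c0^4 * c1 + 2 * u1^6 * u5 * c0^5 + 1416 * u1^5 * u2^3 * c0^4 * c1 + 48 *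 u1^5 * u2 * u4 * c0^5 + 36 * u1^5 * u3^2 * c0^5 + 360 * u1^4 * u2^2 * u3 * c0^5 + 240 * u1^3 * u2^4 * c0^5)"

definition F0 :: "real \<Rightarrow> real \<Rightarrow> real \<Rightarrow> real \<Rightarrow> real \<Rightarrow> real \<Rightarrow> real \<Rightarrow> real \<Rightarrow> real \<Rightarrow> real \<Rightarrow> real \<Rightarrow> real \<Rightarrow> real" where
  "F0 h c0 c1 c2 c3 c4 u0 u1 u2 u3 u4 u5 = (h^2 * u1^3 * c0 + u0 * u1)"

definition F1 :: "real \<Rightarrow> real \<Rightarrow> real \<Rightarrow> real \<Rightarrow> real \<Rightarrow> real \<Rightarrow> real \<Rightarrow> real \<Rightarrow> real \<Rightarrow> real \<Rightarrow> real \<Rightarrow> real \<Rightarrow> real" where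
  "F1 h c0 c1 c2 c3 c4 u0 u1 u2 u3 u4 u5 = (h^2 * u1^4 * c1 + 3 * h^2 * u1^2 * u2 * c0 + u0 * u2 + u1^2)"

definition F2 :: "real \<Rightarrow> real \<Rightarrow> real \<Rightarrow> real \<Rightarrow> real \<Rightarrow> real \<Rightarrow> real \<Rightarrow> real \<Rightarrow> real \<Rightarrow> real \<Rightarrow> real \<Rightarrow> real \<Rightarrow> real" where
  "F2 h c0 c1 c2 c3 c4 u0 u1 u2 u3 u4 u5 = (h^2 * u1^5 * c2 + 7 * h^2 * u1^3 * u2 * c1 + 3 * h^2 * u1^2 * u3 * c0 + 6 * h^2 * u1 * u2^2 * c0 + u0 * u3 + 3 * u1 * u2)"

definition F3 :: "real \<Rightarrow> real \<Rightarrow> real \<Rightarrow> real \<Rightarrow> real \<Rightarrow> real \<Rightarrow> real \<Rightarrow> real \<Rightarrow> real \<Rightarrow> real \<Rightarrow> real \<Rightarrow> real \<Rightarrow> real" where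
  "F3 h c0 c1 c2 c3 c4 u0 u1 u2 u3 u4 u5 = (h^2 * u1^6 * c3 + 12 * h^2 * u1^4 * u2 * c2 + 10 * h^2 * u1^3 * u3 * c1 + 27 * h^2 * u1^2 * u2^2 * c1 + 3 * h^2 * u1^2 * u4 * c0 + 18 * h^2 * u1 * u2 * u3 * c0 + 6 * h^2 * u2^3 * c0 + u0 * u4 + 4 * u1 * u3 + 3 * u2^2)"

definition F4 :: "real \<Rightarrow> real \<Rightarrow> real \<Rightarrow> real \<Rightarrow> real \<Rightarrow> real \<Rightarrow> real \<Rightarrow> real \<Rightarrow> real \<Rightarrow> real \<Rightarrow> real \<Rightarrow> real \<Rightarrow> real" where
  "F4 h c0 c1 c2 c3 c4 u0 u1 u2 u3 u4 u5 = (h^2 * u1^7 * c4 + 18 * h^2 * u1^5 * u2 * c3 + 22 * h^2 * u1^4 * u3 * c2 + 75 * h^2 * u1^3 * u2^2 * c2 + 13 * h^2 * u1^3 * u4 * c1 + 102 * h^2 * u1^2 * u2 * u3 * c1 + 3 * h^2 * u1^2 * u5 * c0 + 60 * h^2 * u1 * u2^3 * c1 + 24 * h^2 * u1 * u2 * u4 * c0 + 18 * h^2 * u1 * u3^2 * c0 + 36 * h^2 * u2^2 * u3 * c0 + u0 * u5 + 5 * u1 * u4 + 10 * u2 * u3)"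

definition LIN :: "real \<Rightarrow> real \<Rightarrow> real \<Rightarrow> real \<Rightarrow> real \<Rightarrow> real \<Rightarrow> real \<Rightarrow> real \<Rightarrow> real \<Rightarrow> real \<Rightarrow> real \<Rightarrow> real \<Rightarrow> real \<Rightarrow> real \<Rightarrow> real \<Rightarrow> real \<Rightarrow> real" where
  "LIN h c0 c1 c2 c3 c4 u0 u1 u2 u3 u4 g0 g1 g2 g3 g4 = ((16/35) * h^8 * u1^8 * c0^3 * c4 * g0 + (340/63) * h^8 * u1^8 * c0^2 * c1 * c3 * g0 + (1268/315) * h^8 * u1^8 * c0^2 * c2^2 * g0 + (5044/315) * h^8 * u1^8 * c0 * c1^2 * c2 * g0 + (836/315) * h^8 * u1^8 * c1^4 * g0 + (128/35) * h^8 * u1^7 * c0^3 * c3 * g1 + (10144/315) * h^8 * u1^7 * c0^2 * c1 * c2 * g1 + (6688/315) * h^8 * u1^7 * c0 * c1^3 * g1 + (128/15) * h^8 * u1^6 * u2 * c0^3 * c3 * g0 + (3428/45) * h^8 * u1^6 * u2 * c0^2 * c1 * c2 * g0 + (2276/45) * h^8 * u1^6 * u2 * c0 * c1^3 * g0 + (128/15) * h^8 * u1^6 * c0^3 * c2 * g2 + (1138/45) * h^8 * u1^6 * c0^2 * c1^2 * g2 + (256/5) * h^8 * u1^5 * u2 * c0^3 * c2 * g1 + (2276/15) * h^8 * u1^5 * u2 * c0^2 * c1^2 * g1 + 8 * h^8 * u1^5 * u3 * c0^3 * c2 * g0 + 24 * h^8 * u1^5 * u3 * c0^2 * c1^2 *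 g0 + 8 * h^8 * u1^5 * c0^3 * c1 * g3 + (112/3) * h^8 * u1^4 * u2^2 * c0^3 * c2 * g0 + 112 * h^8 * u1^4 * u2^2 * c0^2 * c1^2 * g0 + (224/3) * h^8 * u1^4 * u2 * c0^3 * c1 * g2 + 40 * h^8 * u1^4 * u3 * c0^3 * c1 * g1 + (8/3) * h^8 * u1^4 * u4 * c0^3 * c1 * g0 + (2/3) * h^8 * u1^4 * c0^4 * g4 + (448/3) * h^8 * u1^3 * u2^2 * c0^3 * c1 * g1 + 32 * h^8 * u1^3 * u2 * u3 * c0^3 * c1 * g0 + 8 * h^8 * u1^3 * u2 * c0^4 * g3 + 8 * h^8 * u1^3 * u3 * c0^4 * g2 + (8/3) * h^8 * u1^3 * u4 * c0^4 * g1 + 32 * h^8 * u1^2 * u2^3 * c0^3 * c1 * g0 + 24 * h^8 * u1^2 * u2^2 * c0^4 * g2 + 24 * h^8 * u1^2 * u2 * u3 * c0^4 * g1 + 16 * h^8 * u1 * u2^3 * c0^4 * g1 - (14/15) * h^6 * u1^6 * c0^2 * c3 * g0 - (28/5) * h^6 * u1^6 * c0 * c1 * c2 * g0 - (28/15) * h^6 * u1^6 * c1^3 * g0 - (28/5) * h^6 * u1^5 * c0^2 * c2 * g1 - (56/5) * h^6 * u1^5 * c0 * c1^2 * g1 - (26/3) * h^6 * u1^4 * u2 * c0^2 * c2 * g0 - (52/3) * h^6 * u1^4 * u2 * c0 * c1^2 * g0 - (26/3) * h^6 * u1^4 * c0^2 * c1 * g2 - (104/3) * h^6 * u1^3 *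 u2 * c0^2 * c1 * g1 - 4 * h^6 * u1^3 * u3 * c0^2 * c1 * g0 - (4/3) * h^6 * u1^3 * c0^3 * g3 - 12 * h^6 * u1^2 * u2^2 * c0^2 * c1 * g0 - 8 * h^6 * u1^2 * u2 * c0^3 * g2 - 4 * h^6 * u1^2 * u3 * c0^3 * g1 - 8 * h^6 * u1 * u2^2 * c0^3 * g1 + (4/3) * h^4 * u1^4 * c0 * c2 * g0 + (4/3) * h^4 * u1^4 * c1^2 * g0 + (16/3) * h^4 * u1^3 * c0 * c1 * g1 + 4 * h^4 * u1^2 * u2 * c0 * c1 * g0 + 2 * h^4 * u1^2 * c0^2 * g2 + 4 * h^4 * u1 * u2 * c0^2 * g1 - h^2 * u1^2 * c1 * g0 - 2 * h^2 * u1 * c0 * g1 + g0)"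


lemma MP_split: "MP h c0 c1 c2 c3 u0 u1 u2 u3 u4 = V0 c0 c1 c2 c3 c4 u0 u1 u2 u3 u4 u5 + h^2 * V1 c0 c1 c2 c3 c4 u0 u1 u2 u3 u4 u5 + h^4 * V2 c0 c1 c2 c3 c4 u0 u1 u2 u3 u4 u5 + h^6 * V3 c0 c1 c2 c3 c4 u0 u1 u2 u3 u4 u5 + h^8 * V4 c0 c1 c2 c3 c4 u0 u1 u2 u3 u4 u5"
  unfolding MP_def V0_def V1_def V2_def V3_def V4_def by algebra


lemma LIN_split: "LIN h c0 c1 c2 c3 c4 u0 u1 u2 u3 u4 (F0 h c0 c1 c2 c3 c4 u0 u1 u2 u3 u4 u5) (F1 h c0 c1 c2 c3 c4 u0 u1 u2 u3 u4 u5) (F2 h c0 c1 c2 c3 c4 u0 u1 u2 u3 u4 u5) (F3 h c0 c1 c2 c3 c4 u0 u1 u2 u3 u4 u5) (F4 h c0 c1 c2 c3 c4 u0 u1 u2 u3 u4 u5) = T0 c0 c1 c2 c3 c4 u0 u1 u2 u3 u4 u5 + h^2 * T1 c0 c1 c2 c3 c4 u0 u1 u2 u3 u4 u5 + h^4 * T2 c0 c1 c2 c3 c4 u0 u1 u2 u3 u4 u5 + h^6 * T3 c0 c1 c2 c3 c4 u0 u1 u2 u3 u4 u5 + h^8 * T4 c0 c1 c2 c3 c4 u0 u1 u2 u3 u4 u5 + h^10 * T5 c0 c1 c2 c3 c4 u0 u1 u2 u3 u4 u5"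
  unfolding LIN_def V0_def V1_def V2_def V3_def V4_def W0_def W1_def W2_def W3_def W4_def T0_def T1_def T2_def T3_def T4_def T5_def F0_def F1_def F2_def F3_def F4_def by algebra


lemma ord0: "T0 c0 c1 c2 c3 c4 u0 u1 u2 u3 u4 u5 = V0 c0 c1 c2 c3 c4 u0 u1 u2 u3 u4 u5 * W0 c0 c1 c2 c3 c4 u0 u1 u2 u3 u4 u5"
  unfolding V0_def V1_def V2_def V3_def V4_def W0_def W1_def W2_def W3_def W4_def T0_def T1_def T2_def T3_def T4_def T5_def F0_def F1_def F2_def F3_def F4_def by (simp; algebra?)


lemma ord1: "T1 c0 c1 c2 c3 c4 u0 u1 u2 u3 u4 u5 = V0 c0 c1 c2 c3 c4 u0 u1 u2 u3 u4 u5 * W1 c0 c1 c2 c3 c4 u0 u1 u2 u3 u4 u5 + V1 c0 c1 c2 c3 c4 u0 u1 u2 u3 u4 u5 * W0 c0 c1 c2 c3 c4 u0 u1 u2 u3 u4 u5"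
  unfolding V0_def V1_def V2_def V3_def V4_def W0_def W1_def W2_def W3_def W4_def T0_def T1_def T2_def T3_def T4_def T5_def F0_def F1_def F2_def F3_def F4_def by (simp; algebra?)


lemma ord2: "T2 c0 c1 c2 c3 c4 u0 u1 u2 u3 u4 u5 = V0 c0 c1 c2 c3 c4 u0 u1 u2 u3 u4 u5 * W2 c0 c1 c2 c3 c4 u0 u1 u2 u3 u4 u5 + V1 c0 c1 c2 c3 c4 u0 u1 u2 u3 u4 u5 * W1 c0 c1 c2 c3 c4 u0 u1 u2 u3 u4 u5 + V2 c0 c1 c2 c3 c4 u0 u1 u2 u3 u4 u5 * W0 c0 c1 c2 c3 c4 u0 u1 u2 u3 u4 u5"
  unfolding V0_def V1_def V2_def V3_def V4_def W0_def W1_def W2_def W3_def W4_def T0_def T1_def T2_def T3_def T4_def T5_def F0_def F1_def F2_def F3_def F4_def by (simp; algebra?)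


lemma ord3: "T3 c0 c1 c2 c3 c4 u0 u1 u2 u3 u4 u5 = V0 c0 c1 c2 c3 c4 u0 u1 u2 u3 u4 u5 * W3 c0 c1 c2 c3 c4 u0 u1 u2 u3 u4 u5 + V1 c0 c1 c2 c3 c4 u0 u1 u2 u3 u4 u5 * W2 c0 c1 c2 c3 c4 u0 u1 u2 u3 u4 u5 + V2 c0 c1 c2 c3 c4 u0 u1 u2 u3 u4 u5 * W1 c0 c1 c2 c3 c4 u0 u1 u2 u3 u4 u5 + V3 c0 c1 c2 c3 c4 u0 u1 u2 u3 u4 u5 * W0 c0 c1 c2 c3 c4 u0 u1 u2 u3 u4 u5"
  unfolding V0_def V1_def V2_def V3_def V4_def W0_def W1_def W2_def W3_def W4_def T0_def T1_def T2_def T3_def T4_def T5_def F0_def F1_def F2_def F3_def F4_def by (simp; algebra?)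


lemma ord4: "T4 c0 c1 c2 c3 c4 u0 u1 u2 u3 u4 u5 = V0 c0 c1 c2 c3 c4 u0 u1 u2 u3 u4 u5 * W4 c0 c1 c2 c3 c4 u0 u1 u2 u3 u4 u5 + V1 c0 c1 c2 c3 c4 u0 u1 u2 u3 u4 u5 * W3 c0 c1 c2 c3 c4 u0 u1 u2 u3 u4 u5 + V2 c0 c1 c2 c3 c4 u0 u1 u2 u3 u4 u5 * W2 c0 c1 c2 c3 c4 u0 u1 u2 u3 u4 u5 + V3 c0 c1 c2 c3 c4 u0 u1 u2 u3 u4 u5 * W1 c0 c1 c2 c3 c4 u0 u1 u2 u3 u4 u5 + V4 c0 c1 c2 c3 c4 u0 u1 u2 u3 u4 u5 * W0 c0 c1 c2 c3 c4 u0 u1 u2 u3 u4 u5"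
  unfolding V0_def V1_def V2_def V3_def V4_def W0_def W1_def W2_def W3_def W4_def T0_def T1_def T2_def T3_def T4_def T5_def F0_def F1_def F2_def F3_def F4_def by (simp; algebra?)


context
  fixes U D :: "nat \<Rightarrow> real \<Rightarrow> real"
  assumes dU: "\<And>k y. (U k has_real_derivative U (Suc k) y) (at y)"
      and dD: "\<And>k y. (D k has_real_derivative D (Suc k) y) (at y)"
begin

lemma Ur: "E = U (k+1) y \<Longrightarrow> (U k has_real_derivative E) (at y within S)"
  using has_field_derivative_at_within[OF dU[of k y]] by simp

lemma Dr: "(g has_real_derivative g') (at y within S) \<Longrightarrow> E = D (k+1) (g y) * g' \<Longrightarrow>
   ((\<lambda>y. D k (g y)) has_real_derivative E) (at y within S)"
  using DERIV_chain2[OF dD] by simp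


lemma dF0: "((\<lambda>y. F0 h (D 0 (U 0 y)) (D 1 (U 0 y)) (D 2 (U 0 y)) (D 3 (U 0 y)) (D 4 (U 0 y)) (U 0 y) (U 1 y) (U 2 y) (U 3 y) (U 4 y) (U 5 y)) has_real_derivative F1 h (D 0 (U 0 y)) (D 1 (U 0 y)) (D 2 (U 0 y)) (D 3 (U 0 y)) (D 4 (U 0 y)) (U 0 y) (U 1 y) (U 2 y) (U 3 y) (U 4 y) (U 5 y)) (at y)"
  unfolding F0_def F1_def
  apply (rule derivative_eq_intros Ur Dr refl)+
  apply (simp add: numeral_2_eq_2[symmetric])
  by algebra


lemma dF1: "((\<lambda>y. F1 h (D 0 (U 0 y)) (D 1 (U 0 y)) (D 2 (U 0 y)) (D 3 (U 0 y)) (D 4 (U 0 y)) (U 0 y) (U 1 y) (U 2 y) (U 3 y) (U 4 y) (U 5 y)) has_real_derivative F2 h (D 0 (U 0 y)) (D 1 (U 0 y)) (D 2 (U 0 y)) (D 3 (U 0 y)) (D 4 (U 0 y)) (U 0 y) (U 1 y) (U 2 y) (U 3 y) (U 4 y) (U 5 y)) (at y)"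
  unfolding F1_def F2_def
  apply (rule derivative_eq_intros Ur Dr refl)+
  apply (simp add: numeral_2_eq_2[symmetric])
  by algebra


lemma dF2: "((\<lambda>y. F2 h (D 0 (U 0 y)) (D 1 (U 0 y)) (D 2 (U 0 y)) (D 3 (U 0 y)) (D 4 (U 0 y)) (U 0 y) (U 1 y) (U 2 y) (U 3 y) (U 4 y) (U 5 y)) has_real_derivative F3 h (D 0 (U 0 y)) (D 1 (U 0 y)) (D 2 (U 0 y)) (D 3 (U 0 y)) (D 4 (U 0 y)) (U 0 y) (U 1 y) (U 2 y) (U 3 y) (U 4 y) (U 5 y)) (at y)"
  unfolding F2_def F3_def
  apply (rule derivative_eq_intros Ur Dr refl)+
  apply (simp add: numeral_2_eq_2[symmetric])
  by algebra


lemma dF3: "((\<lambda>y. F3 h (D 0 (U 0 y)) (D 1 (U 0 y)) (D 2 (U 0 y)) (D 3 (U 0 y)) (D 4 (U 0 y)) (U 0 y) (U 1 y) (U 2 y) (U 3 y) (U 4 y) (U 5 y)) has_real_derivative F4 h (D 0 (U 0 y)) (D 1 (U 0 y)) (D 2 (U 0 y)) (D 3 (U 0 y)) (D 4 (U 0 y)) (U 0 y) (U 1 y) (U 2 y) (U 3 y) (U 4 y) (U 5 y)) (at y)"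
  unfolding F3_def F4_def
  apply (rule derivative_eq_intros Ur Dr refl)+
  apply (simp add: numeral_2_eq_2[symmetric])
  by algebra


lemma dMP: "((\<lambda>y. MP h (D 0 (U 0 y)) (D 1 (U 0 y)) (D 2 (U 0 y)) (D 3 (U 0 y)) (U 0 y) (U 1 y) (U 2 y) (U 3 y) (U 4 y)) has_real_derivative (W0 (D 0 (U 0 x)) (D 1 (U 0 x)) (D 2 (U 0 x)) (D 3 (U 0 x)) (D 4 (U 0 x)) (U 0 x) (U 1 x) (U 2 x) (U 3 x) (U 4 x) (U 5 x) + h^2 * W1 (D 0 (U 0 x)) (D 1 (U 0 x)) (D 2 (U 0 x)) (D 3 (U 0 x)) (D 4 (U 0 x)) (U 0 x) (U 1 x) (U 2 x) (U 3 x) (U 4 x) (U 5 x) + h^4 * W2 (D 0 (U 0 x)) (D 1 (U 0 x)) (D 2 (U 0 x)) (D 3 (U 0 x)) (D 4 (U 0 x)) (U 0 x) (U 1 x) (U 2 x) (U 3 x) (U 4 x) (U 5 x) + h^6 * W3 (D 0 (U 0 x)) (D 1 (U 0 x)) (D 2 (U 0 x)) (D 3 (U 0 x)) (D 4 (U 0 x)) (U 0 x) (U 1 x) (U 2 x) (U 3 x) (U 4 x) (U 5 x) + h^8 * W4 (D 0 (U 0 x)) (D 1 (U 0 x)) (D 2 (U 0 x)) (D 3 (U 0 x)) (D 4 (U 0 x)) (U 0 x) (U 1 x) (U 2 x) (U 3 x) (U 4 x) (U 5 x))) (at x)"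
  unfolding MP_def W0_def W1_def W2_def W3_def W4_def
  apply (rule derivative_eq_intros Ur Dr refl)+
  apply (simp add: numeral_2_eq_2[symmetric])
  by algebra


lemma dLIN: "((\<lambda>s. MP h (D 0 (U 0 x + s * g0)) (D 1 (U 0 x + s * g0)) (D 2 (U 0 x + s * g0)) (D 3 (U 0 x + s * g0)) (U 0 x + s * g0) (U 1 x + s * g1) (U 2 x + s * g2) (U 3 x + s * g3) (U 4 x + s * g4)) has_real_derivative LIN h (D 0 (U 0 x)) (D 1 (U 0 x)) (D 2 (U 0 x)) (D 3 (U 0 x)) (D 4 (U 0 x)) (U 0 x) (U 1 x) (U 2 x) (U 3 x) (U 4 x) g0 g1 g2 g3 g4) (at 0)"
  unfolding MP_def LIN_def
  apply (rule derivative_eq_intros Ur Dr refl)+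
  apply (simp add: numeral_2_eq_2[symmetric])
  by algebra

end


lemma smooth_DERIV:
  assumes "smooth f"
  shows "((deriv^^k) f has_real_derivative (deriv^^(Suc k)) f y) (at y)"
  using assms unfolding smooth_def
  by (simp add: DERIV_deriv_iff_real_differentiable)

lemma deriv_lin:
  fixes f g :: "real \<Rightarrow> real"
  assumes df: "\<And>j y. j < n \<Longrightarrow> ((deriv^^j) f has_real_derivative (deriv^^(Suc j)) f y) (at y)"
      and dg: "\<And>j y. j < n \<Longrightarrow> ((deriv^^j) g has_real_derivative (deriv^^(Suc j)) g y) (at y)"
  shows "k \<le> n \<Longrightarrow> (deriv^^k) (\<lambda>y. f y + s * g y) = (\<lambda>y. (deriv^^k) f y + s * (deriv^^k) g y)"
proof (induction k)
  case 0
  show ?case by simp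
next
  case (Suc k)
  then have IH: "(deriv^^k) (\<lambda>y. f y + s * g y) = (\<lambda>y. (deriv^^k) f y + s * (deriv^^k) g y)"
    by simp
  have kn: "k < n" using Suc by simp
  show ?case
  proof
    fix y
    have "((\<lambda>y. (deriv^^k) f y + s * (deriv^^k) g y) has_real_derivative
        (deriv^^(Suc k)) f y + s * (deriv^^(Suc k)) g y) (at y)"
      using df[OF kn] dg[OF kn] by (intro DERIV_add DERIV_cmult) auto
    from DERIV_imp_deriv[OF this]
    show "(deriv^^Suc k) (\<lambda>y. f y + s * g y) y = (deriv^^Suc k) f y + s * (deriv^^Suc k) g y"
      using IH by simp
  qed
qed

lemma miura_MP:
  "miura c h w x = MP h (c (w x)) ((deriv^^1) c (w x)) ((deriv^^2) c (w x)) ((deriv^^3) c (w x))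
     (w x) ((deriv^^1) w x) ((deriv^^2) w x) ((deriv^^3) w x) ((deriv^^4) w x)"
  unfolding miura_def MP_def Let_def by simp

lemma final_alg:
  fixes h t0 t1 t2 t3 t4 t5 v0 v1 v2 v3 v4 w0 w1 w2 w3 w4 :: real
  assumes "t0 = v0 * w0" "t1 = v0 * w1 + v1 * w0" "t2 = v0 * w2 + v1 * w1 + v2 * w0"
    "t3 = v0 * w3 + v1 * w2 + v2 * w1 + v3 * w0" "t4 = v0 * w4 + v1 * w3 + v2 * w2 + v3 * w1 + v4 * w0"
  shows "(t0 + h^2 * t1 + h^4 * t2 + h^6 * t3 + h^8 * t4 + h^10 * t5)
     - (v0 + h^2 * v1 + h^4 * v2 + h^6 * v3 + h^8 * v4) * (w0 + h^2 * w1 + h^4 * w2 + h^6 * w3 + h^8 * w4)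
     = h^10 * (t5 - ((v1 * w4 + v2 * w3 + v3 * w2 + v4 * w1) + h^2 * (v2 * w4 + v3 * w3 + v4 * w2)
        + h^4 * (v3 * w4 + v4 * w3) + h^6 * (v4 * w4)))"
  unfolding assms(1-5) by algebra

lemma bigo_h10:
  fixes R :: "real \<Rightarrow> real"
  assumes "isCont R 0"
  shows "(\<lambda>h. h^10 * R h) \<in> O[at 0](\<lambda>h. h^10)"
proof (rule bigoI)
  have "(R \<longlongrightarrow> R 0) (at 0)" using assms by (simp add: isCont_def)
  then have "eventually (\<lambda>h. dist (R h) (R 0) < 1) (at 0)" by (rule tendstoD) simp
  then show "eventually (\<lambda>h. norm (h^10 * R h) \<le> (\<bar>R 0\<bar> + 1) * norm (h^10)) (at 0)"
  proof (rule eventually_mono)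
    fix h assume "dist (R h) (R 0) < 1"
    then have "\<bar>R h\<bar> \<le> \<bar>R 0\<bar> + 1" by (simp add: dist_real_def)
    then show "norm (h^10 * R h) \<le> (\<bar>R 0\<bar> + 1) * norm (h^10)"
      by (simp add: abs_mult mult.commute mult_right_mono)
  qed
qed

theorem mainTheorem5:
  fixes c u :: "real \<Rightarrow> real" and x :: real
  assumes "smooth c" and "smooth u"
  shows "(\<lambda>h. miura_t c h u x - miura c h u x * deriv (\<lambda>y. miura c h u y) x)
           \<in> O[at 0](\<lambda>h. h ^ 10)"
proof -
  define U where "U k = (deriv^^k) u" for k
  define D where "D k = (deriv^^k) c" for k
  have dU: "\<And>k y. (U k has_real_derivative U (Suc k) y) (at y)"
    unfolding U_def using smooth_DERIV[OF assms(2)] .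
  have dD: "\<And>k y. (D k has_real_derivative D (Suc k) y) (at y)"
    unfolding D_def using smooth_DERIV[OF assms(1)] .
  have U0: "U 0 = u" by (simp add: U_def)
  have D0: "D 0 = c" by (simp add: D_def)
  have key: "miura_t c h u x - miura c h u x * deriv (\<lambda>y. miura c h u y) x = h^10 * (T5 (D 0 (U 0 x)) (D 1 (U 0 x)) (D 2 (U 0 x)) (D 3 (U 0 x)) (D 4 (U 0 x)) (U 0 x) (U 1 x) (U 2 x) (U 3 x) (U 4 x) (U 5 x) - ((V1 (D 0 (U 0 x)) (D 1 (U 0 x)) (D 2 (U 0 x)) (D 3 (U 0 x)) (D 4 (U 0 x)) (U 0 x) (U 1 x) (U 2 x) (U 3 x) (U 4 x) (U 5 x) * W4 (D 0 (U 0 x)) (D 1 (U 0 x)) (D 2 (U 0 x)) (D 3 (U 0 x)) (D 4 (U 0 x)) (U 0 x) (U 1 x) (U 2 x) (U 3 x) (U 4 x) (U 5 x) + V2 (D 0 (U 0 x)) (D 1 (U 0 x)) (D 2 (U 0 x)) (D 3 (U 0 x)) (D 4 (U 0 x)) (U 0 x) (U 1 x) (U 2 x) (U 3 x) (U 4 x) (U 5 x) * W3 (D 0 (U 0 x)) (D 1 (U 0 x)) (D 2 (U 0 x)) (D 3 (U 0 x)) (D 4 (U 0 x)) (U 0 x) (U 1 x) (U 2 x) (U 3 x) (U 4 x) (U 5 x) + V3 (D 0 (U 0 x)) (D 1 (U 0 x)) (D 2 (U 0 x)) (D 3 (U 0 x)) (D 4 (U 0 x)) (U 0 x) (U 1 x)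 (U 2 x) (U 3 x) (U 4 x) (U 5 x) * W2 (D 0 (U 0 x)) (D 1 (U 0 x)) (D 2 (U 0 x)) (D 3 (U 0 x)) (D 4 (U 0 x)) (U 0 x) (U 1 x) (U 2 x) (U 3 x) (U 4 x) (U 5 x) + V4 (D 0 (U 0 x)) (D 1 (U 0 x)) (D 2 (U 0 x)) (D 3 (U 0 x)) (D 4 (U 0 x)) (U 0 x) (U 1 x) (U 2 x) (U 3 x) (U 4 x) (U 5 x) * W1 (D 0 (U 0 x)) (D 1 (U 0 x)) (D 2 (U 0 x)) (D 3 (U 0 x)) (D 4 (U 0 x)) (U 0 x) (U 1 x) (U 2 x) (U 3 x) (U 4 x) (U 5 x)) + h^2 * (V2 (D 0 (U 0 x)) (D 1 (U 0 x)) (D 2 (U 0 x)) (D 3 (U 0 x)) (D 4 (U 0 x)) (U 0 x) (U 1 x) (U 2 x) (U 3 x) (U 4 x) (U 5 x) * W4 (D 0 (U 0 x)) (D 1 (U 0 x)) (D 2 (U 0 x)) (D 3 (U 0 x)) (D 4 (U 0 x)) (U 0 x) (U 1 x) (U 2 x) (U 3 x) (U 4 x) (U 5 x) + V3 (D 0 (U 0 x)) (D 1 (U 0 x)) (D 2 (U 0 x)) (D 3 (U 0 x)) (D 4 (U 0 x)) (U 0 x) (U 1 x) (U 2 x) (U 3 x) (U 4 x) (U 5 x) * W3 (D 0 (U 0 x)) (D 1 (U 0 x)) (D 2 (U 0 x)) (D 3 (U 0 x)) (D 4 (U 0 x)) (U 0 x) (U 1 x) (U 2 x) (U 3 x) (U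 4 x) (U 5 x) + V4 (D 0 (U 0 x)) (D 1 (U 0 x)) (D 2 (U 0 x)) (D 3 (U 0 x)) (D 4 (U 0 x)) (U 0 x) (U 1 x) (U 2 x) (U 3 x) (U 4 x) (U 5 x) * W2 (D 0 (U 0 x)) (D 1 (U 0 x)) (D 2 (U 0 x)) (D 3 (U 0 x)) (D 4 (U 0 x)) (U 0 x) (U 1 x) (U 2 x) (U 3 x) (U 4 x) (U 5 x)) + h^4 * (V3 (D 0 (U 0 x)) (D 1 (U 0 x)) (D 2 (U 0 x)) (D 3 (U 0 x)) (D 4 (U 0 x)) (U 0 x) (U 1 x) (U 2 x) (U 3 x) (U 4 x) (U 5 x) * W4 (D 0 (U 0 x)) (D 1 (U 0 x)) (D 2 (U 0 x)) (D 3 (U 0 x)) (D 4 (U 0 x)) (U 0 x) (U 1 x) (U 2 x) (U 3 x) (U 4 x) (U 5 x) + V4 (D 0 (U 0 x)) (D 1 (U 0 x)) (D 2 (U 0 x)) (D 3 (U 0 x)) (D 4 (U 0 x)) (U 0 x) (U 1 x) (U 2 x) (U 3 x) (U 4 x) (U 5 x) * W3 (D 0 (U 0 x)) (D 1 (U 0 x)) (D 2 (U 0 x)) (D 3 (U 0 x)) (D 4 (U 0 x)) (U 0 x) (U 1 x) (U 2 x) (U 3 x) (U 4 x) (U 5 x)) + h^6 * (V4 (D 0 (U 0 x)) (D 1 (U 0 x)) (D 2 (U 0 x)) (D 3 (U 0 x)) (D 4 (U 0 x)) (U 0 x) (U 1 x) (U 2 x) (U 3 x) (U 4 x) (U 5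 x) * W4 (D 0 (U 0 x)) (D 1 (U 0 x)) (D 2 (U 0 x)) (D 3 (U 0 x)) (D 4 (U 0 x)) (U 0 x) (U 1 x) (U 2 x) (U 3 x) (U 4 x) (U 5 x))))" for h
  proof -
    define fl where "fl = flow c h u"
    define FL where "FL k = (\<lambda>y. [F0 h (D 0 (U 0 y)) (D 1 (U 0 y)) (D 2 (U 0 y)) (D 3 (U 0 y)) (D 4 (U 0 y)) (U 0 y) (U 1 y) (U 2 y) (U 3 y) (U 4 y) (U 5 y), F1 h (D 0 (U 0 y)) (D 1 (U 0 y)) (D 2 (U 0 y)) (D 3 (U 0 y)) (D 4 (U 0 y)) (U 0 y) (U 1 y) (U 2 y) (U 3 y) (U 4 y) (U 5 y), F2 h (D 0 (U 0 y)) (D 1 (U 0 y)) (D 2 (U 0 y)) (D 3 (U 0 y)) (D 4 (U 0 y)) (U 0 y) (U 1 y) (U 2 y) (U 3 y) (U 4 y) (U 5 y), F3 h (D 0 (U 0 y)) (D 1 (U 0 y)) (D 2 (U 0 y)) (D 3 (U 0 y)) (D 4 (U 0 y)) (U 0 y) (U 1 y) (U 2 y) (U 3 y) (U 4 y) (U 5 y), F4 h (D 0 (U 0 y)) (D 1 (U 0 y)) (D 2 (U 0 y)) (D 3 (U 0 y)) (D 4 (U 0 y)) (U 0 y) (U 1 y) (U 2 y) (U 3 y) (U 4 y) (U 5 y)] ! k)" for k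
    have FL0: "FL 0 = (\<lambda>y. F0 h (D 0 (U 0 y)) (D 1 (U 0 y)) (D 2 (U 0 y)) (D 3 (U 0 y)) (D 4 (U 0 y)) (U 0 y) (U 1 y) (U 2 y) (U 3 y) (U 4 y) (U 5 y))" by (simp add: FL_def)
    have FL1: "FL (Suc 0) = (\<lambda>y. F1 h (D 0 (U 0 y)) (D 1 (U 0 y)) (D 2 (U 0 y)) (D 3 (U 0 y)) (D 4 (U 0 y)) (U 0 y) (U 1 y) (U 2 y) (U 3 y) (U 4 y) (U 5 y))" by (simp add: FL_def)
    have FL2: "FL (Suc (Suc 0)) = (\<lambda>y. F2 h (D 0 (U 0 y)) (D 1 (U 0 y)) (D 2 (U 0 y)) (D 3 (U 0 y)) (D 4 (U 0 y)) (U 0 y) (U 1 y) (U 2 y) (U 3 y) (U 4 y) (U 5 y))" by (simp add: FL_def)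
    have FL3: "FL (Suc (Suc (Suc 0))) = (\<lambda>y. F3 h (D 0 (U 0 y)) (D 1 (U 0 y)) (D 2 (U 0 y)) (D 3 (U 0 y)) (D 4 (U 0 y)) (U 0 y) (U 1 y) (U 2 y) (U 3 y) (U 4 y) (U 5 y))" by (simp add: FL_def)
    have FL4: "FL (Suc (Suc (Suc (Suc 0)))) = (\<lambda>y. F4 h (D 0 (U 0 y)) (D 1 (U 0 y)) (D 2 (U 0 y)) (D 3 (U 0 y)) (D 4 (U 0 y)) (U 0 y) (U 1 y) (U 2 y) (U 3 y) (U 4 y) (U 5 y))" by (simp add: FL_def)
    have dFL: "(FL k has_real_derivative FL (Suc k) y) (at y)" if "k < 4" for k y
    proof -
      from that have "k = 0 \<or> k = Suc 0 \<or> k = Suc (Suc 0) \<or> k = Suc (Suc (Suc 0))" by auto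
      then show ?thesis
        using dF0[where U=U and D=D, OF dU dD, of h y] dF1[where U=U and D=D, OF dU dD, of h y] dF2[where U=U and D=D, OF dU dD, of h y] dF3[where U=U and D=D, OF dU dD, of h y]
        by (elim disjE) (simp_all only: FL0 FL1 FL2 FL3 FL4)
    qed
    have fl0: "fl = FL 0"
      unfolding fl_def FL0 flow_def F0_def U_def D_def
      by (rule ext) (simp add: algebra_simps)
    have FE: "k \<le> 4 \<Longrightarrow> (deriv^^k) fl = FL k" for k
    proof (induction k)
      case 0
      then show ?case using fl0 by simp
    next
      case (Suc k)
      then have IH: "(deriv^^k) fl = FL k" and kl: "k < 4" by auto
      show ?case
      proof
        fix y
        show "(deriv^^Suc k) fl y = FL (Suc k) y"
          using DERIV_imp_deriv[OF dFL[OF kl, of y]] IH by simp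
      qed
    qed
    have WK: "(deriv^^k) (\<lambda>y. u y + s * fl y) = (\<lambda>y. U k y + s * FL k y)" if "k \<le> 4" for k s
    proof -
      have "(deriv^^k) (\<lambda>y. u y + s * fl y) = (\<lambda>y. (deriv^^k) u y + s * (deriv^^k) fl y)"
      proof (rule deriv_lin[OF _ _ that])
        fix j y assume "j < (4::nat)"
        then show "((deriv^^j) fl has_real_derivative (deriv^^Suc j) fl y) (at y)"
          using FE[of j] FE[of "Suc j"] dFL[of j y] by simp
      qed (rule smooth_DERIV[OF assms(2)])
      then show ?thesis using FE[OF that] by (simp add: U_def)
    qed
    have FLx: "FL 0 x = F0 h (D 0 (U 0 x)) (D 1 (U 0 x)) (D 2 (U 0 x)) (D 3 (U 0 x)) (D 4 (U 0 x)) (U 0 x) (U 1 x) (U 2 x) (U 3 x) (U 4 x) (U 5 x)" "FL 1 x = F1 h (D 0 (U 0 x)) (D 1 (U 0 x)) (D 2 (U 0 x)) (D 3 (U 0 x)) (D 4 (U 0 x)) (U 0 x) (U 1 x) (U 2 x) (U 3 x) (U 4 x) (U 5 x)" "FL 2 x = F2 h (D 0 (U 0 x)) (D 1 (U 0 x)) (D 2 (U 0 x)) (D 3 (U 0 x)) (D 4 (U 0 x)) (U 0 x) (U 1 x) (U 2 x) (U 3 x) (U 4 x) (U 5 x)" "FL 3 x = F3 h (D 0 (U 0 x)) (D 1 (U 0 x)) (D 2 (U 0 x)) (D 3 (U 0 x)) (D 4 (U 0 x)) (U 0 x) (U 1 x) (U 2 x) (U 3 x) (U 4 x) (U 5 x)"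 "FL 4 x = F4 h (D 0 (U 0 x)) (D 1 (U 0 x)) (D 2 (U 0 x)) (D 3 (U 0 x)) (D 4 (U 0 x)) (U 0 x) (U 1 x) (U 2 x) (U 3 x) (U 4 x) (U 5 x)"
      by (simp_all add: FL_def)
    have ms: "miura c h (\<lambda>y. u y + s * fl y) x = MP h (D 0 (U 0 x + s * F0 h (D 0 (U 0 x)) (D 1 (U 0 x)) (D 2 (U 0 x)) (D 3 (U 0 x)) (D 4 (U 0 x)) (U 0 x) (U 1 x) (U 2 x) (U 3 x) (U 4 x) (U 5 x))) (D 1 (U 0 x + s * F0 h (D 0 (U 0 x)) (D 1 (U 0 x)) (D 2 (U 0 x)) (D 3 (U 0 x)) (D 4 (U 0 x)) (U 0 x) (U 1 x) (U 2 x) (U 3 x) (U 4 x) (U 5 x))) (D 2 (U 0 x + s * F0 h (D 0 (U 0 x)) (D 1 (U 0 x)) (D 2 (U 0 x)) (D 3 (U 0 x)) (D 4 (U 0 x)) (U 0 x) (U 1 x) (U 2 x) (U 3 x) (U 4 x) (U 5 x))) (D 3 (U 0 x + s * F0 h (D 0 (U 0 x)) (D 1 (U 0 x)) (D 2 (U 0 x)) (D 3 (U 0 x)) (D 4 (U 0 x)) (U 0 x) (U 1 x) (U 2 x) (U 3 x) (U 4 x) (U 5 x))) (U 0 x + s * F0 h (D 0 (U 0 x)) (D 1 (U 0 x)) (D 2 (U 0 x)) (D 3 (U 0 x)) (D 4 (U 0 x)) (U 0 x) (U 1 x) (U 2 x) (U 3 x) (U 4 x) (U 5 x)) (U 1 x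 + s * F1 h (D 0 (U 0 x)) (D 1 (U 0 x)) (D 2 (U 0 x)) (D 3 (U 0 x)) (D 4 (U 0 x)) (U 0 x) (U 1 x) (U 2 x) (U 3 x) (U 4 x) (U 5 x)) (U 2 x + s * F2 h (D 0 (U 0 x)) (D 1 (U 0 x)) (D 2 (U 0 x)) (D 3 (U 0 x)) (D 4 (U 0 x)) (U 0 x) (U 1 x) (U 2 x) (U 3 x) (U 4 x) (U 5 x)) (U 3 x + s * F3 h (D 0 (U 0 x)) (D 1 (U 0 x)) (D 2 (U 0 x)) (D 3 (U 0 x)) (D 4 (U 0 x)) (U 0 x) (U 1 x) (U 2 x) (U 3 x) (U 4 x) (U 5 x)) (U 4 x + s * F4 h (D 0 (U 0 x)) (D 1 (U 0 x)) (D 2 (U 0 x)) (D 3 (U 0 x)) (D 4 (U 0 x)) (U 0 x) (U 1 x) (U 2 x) (U 3 x) (U 4 x) (U 5 x))" for s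
    proof -
      have "(\<lambda>y. u y + s * fl y) x = U 0 x + s * FL 0 x" using fl0 U0 by simp
      moreover have "(deriv^^1) (\<lambda>y. u y + s * fl y) x = U 1 x + s * FL 1 x" using WK[of 1 s] by simp
      moreover have "(deriv^^2) (\<lambda>y. u y + s * fl y) x = U 2 x + s * FL 2 x" using WK[of 2 s] by simp
      moreover have "(deriv^^3) (\<lambda>y. u y + s * fl y) x = U 3 x + s * FL 3 x" using WK[of 3 s] by simp
      moreover have "(deriv^^4) (\<lambda>y. u y + s * fl y) x = U 4 x + s * FL 4 x" using WK[of 4 s] by simp
      ultimately show ?thesis unfolding miura_MP FLx D_def by simp
    qed
    have mt: "miura_t c h u x = (T0 (D 0 (U 0 x)) (D 1 (U 0 x)) (D 2 (U 0 x)) (D 3 (U 0 x)) (D 4 (U 0 x)) (U 0 x) (U 1 x) (U 2 x) (U 3 x) (U 4 x) (U 5 x) + h^2 * T1 (D 0 (U 0 x)) (D 1 (U 0 x)) (D 2 (U 0 x)) (D 3 (U 0 x)) (D 4 (U 0 x)) (U 0 x) (U 1 x) (U 2 x) (U 3 x) (U 4 x) (U 5 x) + h^4 * T2 (D 0 (U 0 x)) (D 1 (U 0 x)) (D 2 (U 0 x)) (D 3 (U 0 x)) (D 4 (U 0 x)) (U 0 x) (U 1 x) (U 2 x) (U 3 x) (U 4 x) (U 5 x) + h^6 * T3 (D 0 (U 0 x)) (D 1 (U 0 x)) (D 2 (U 0 x)) (D 3 (U 0 x)) (D 4 (U 0 x)) (U 0 x) (U 1 x) (U 2 x) (U 3 x)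 (U 4 x) (U 5 x) + h^8 * T4 (D 0 (U 0 x)) (D 1 (U 0 x)) (D 2 (U 0 x)) (D 3 (U 0 x)) (D 4 (U 0 x)) (U 0 x) (U 1 x) (U 2 x) (U 3 x) (U 4 x) (U 5 x) + h^10 * T5 (D 0 (U 0 x)) (D 1 (U 0 x)) (D 2 (U 0 x)) (D 3 (U 0 x)) (D 4 (U 0 x)) (U 0 x) (U 1 x) (U 2 x) (U 3 x) (U 4 x) (U 5 x))"
    proof -
      have "miura_t c h u x = deriv (\<lambda>s. MP h (D 0 (U 0 x + s * F0 h (D 0 (U 0 x)) (D 1 (U 0 x)) (D 2 (U 0 x)) (D 3 (U 0 x)) (D 4 (U 0 x)) (U 0 x) (U 1 x) (U 2 x) (U 3 x) (U 4 x) (U 5 x))) (D 1 (U 0 x + s * F0 h (D 0 (U 0 x)) (D 1 (U 0 x)) (D 2 (U 0 x)) (D 3 (U 0 x)) (D 4 (U 0 x)) (U 0 x) (U 1 x) (U 2 x) (U 3 x) (U 4 x) (U 5 x))) (D 2 (U 0 x + s * F0 h (D 0 (U 0 x)) (D 1 (U 0 x)) (D 2 (U 0 x)) (D 3 (U 0 x)) (D 4 (U 0 x)) (U 0 x) (U 1 x) (U 2 x) (U 3 x) (U 4 x) (U 5 x))) (D 3 (U 0 x + s * F0 h (D 0 (U 0 x)) (D 1 (U 0 x)) (D 2 (U 0 x)) (D 3 (U 0 x)) (D 4 (U 0 x)) (U 0 x) (U 1 x) (U 2 x) (U 3 x) (U 4 x) (U 5 x))) (U 0 x + s * F0 h (D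 0 (U 0 x)) (D 1 (U 0 x)) (D 2 (U 0 x)) (D 3 (U 0 x)) (D 4 (U 0 x)) (U 0 x) (U 1 x) (U 2 x) (U 3 x) (U 4 x) (U 5 x)) (U 1 x + s * F1 h (D 0 (U 0 x)) (D 1 (U 0 x)) (D 2 (U 0 x)) (D 3 (U 0 x)) (D 4 (U 0 x)) (U 0 x) (U 1 x) (U 2 x) (U 3 x) (U 4 x) (U 5 x)) (U 2 x + s * F2 h (D 0 (U 0 x)) (D 1 (U 0 x)) (D 2 (U 0 x)) (D 3 (U 0 x)) (D 4 (U 0 x)) (U 0 x) (U 1 x) (U 2 x) (U 3 x) (U 4 x) (U 5 x)) (U 3 x + s * F3 h (D 0 (U 0 x)) (D 1 (U 0 x)) (D 2 (U 0 x)) (D 3 (U 0 x)) (D 4 (U 0 x)) (U 0 x) (U 1 x) (U 2 x) (U 3 x) (U 4 x) (U 5 x)) (U 4 x + s * F4 h (D 0 (U 0 x)) (D 1 (U 0 x)) (D 2 (U 0 x)) (D 3 (U 0 x)) (D 4 (U 0 x)) (U 0 x) (U 1 x) (U 2 x) (U 3 x) (U 4 x) (U 5 x))) 0"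
        unfolding miura_t_def fl_def[symmetric] ms ..
      also have "\<dots> = LIN h (D 0 (U 0 x)) (D 1 (U 0 x)) (D 2 (U 0 x)) (D 3 (U 0 x)) (D 4 (U 0 x)) (U 0 x) (U 1 x) (U 2 x) (U 3 x) (U 4 x) (F0 h (D 0 (U 0 x)) (D 1 (U 0 x)) (D 2 (U 0 x)) (D 3 (U 0 x)) (D 4 (U 0 x)) (U 0 x) (U 1 x) (U 2 x) (U 3 x) (U 4 x) (U 5 x)) (F1 h (D 0 (U 0 x)) (D 1 (U 0 x)) (D 2 (U 0 x)) (D 3 (U 0 x)) (D 4 (U 0 x)) (U 0 x) (U 1 x) (U 2 x) (U 3 x) (U 4 x) (U 5 x)) (F2 h (D 0 (U 0 x)) (D 1 (U 0 x)) (D 2 (U 0 x)) (D 3 (U 0 x)) (D 4 (U 0 x)) (U 0 x) (U 1 x) (U 2 x) (U 3 x) (U 4 x) (U 5 x)) (F3 h (D 0 (U 0 x)) (D 1 (U 0 x)) (D 2 (U 0 x)) (D 3 (U 0 x)) (D 4 (U 0 x)) (U 0 x) (U 1 x) (U 2 x) (U 3 x) (U 4 x) (U 5 x)) (F4 h (D 0 (U 0 x)) (D 1 (U 0 x)) (D 2 (U 0 x)) (D 3 (U 0 x)) (D 4 (U 0 x)) (U 0 x) (U 1 x) (U 2 x) (U 3 x) (U 4 x) (U 5 x))"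
        by (rule DERIV_imp_deriv[OF dLIN[where U=U and D=D, OF dU dD]])
      also have "\<dots> = (T0 (D 0 (U 0 x)) (D 1 (U 0 x)) (D 2 (U 0 x)) (D 3 (U 0 x)) (D 4 (U 0 x)) (U 0 x) (U 1 x) (U 2 x) (U 3 x) (U 4 x) (U 5 x) + h^2 * T1 (D 0 (U 0 x)) (D 1 (U 0 x)) (D 2 (U 0 x)) (D 3 (U 0 x)) (D 4 (U 0 x)) (U 0 x) (U 1 x) (U 2 x) (U 3 x) (U 4 x) (U 5 x) + h^4 * T2 (D 0 (U 0 x)) (D 1 (U 0 x)) (D 2 (U 0 x)) (D 3 (U 0 x)) (D 4 (U 0 x)) (U 0 x) (U 1 x) (U 2 x) (U 3 x) (U 4 x) (U 5 x) + h^6 * T3 (D 0 (U 0 x)) (D 1 (U 0 x)) (D 2 (U 0 x)) (D 3 (U 0 x)) (D 4 (U 0 x)) (U 0 x) (U 1 x) (U 2 x) (U 3 x) (U 4 x) (U 5 x) + h^8 * T4 (D 0 (U 0 x)) (D 1 (U 0 x)) (D 2 (U 0 x)) (D 3 (U 0 x)) (D 4 (U 0 x)) (U 0 x) (U 1 x) (U 2 x) (U 3 x) (U 4 x) (U 5 x) + h^10 * T5 (D 0 (U 0 x)) (D 1 (U 0 x)) (D 2 (U 0 x)) (D 3 (U 0 x)) (D 4 (U 0 x)) (U 0 x) (U 1 x) (U 2 x) (U 3 x) (U 4 x) (U 5 x))"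
        by (rule LIN_split)
      finally show ?thesis .
    qed
    have my: "miura c h u y = MP h (D 0 (U 0 y)) (D 1 (U 0 y)) (D 2 (U 0 y)) (D 3 (U 0 y)) (U 0 y) (U 1 y) (U 2 y) (U 3 y) (U 4 y)" for y
      unfolding miura_MP U_def D_def by simp
    have mx: "miura c h u x = (V0 (D 0 (U 0 x)) (D 1 (U 0 x)) (D 2 (U 0 x)) (D 3 (U 0 x)) (D 4 (U 0 x)) (U 0 x) (U 1 x) (U 2 x) (U 3 x) (U 4 x) (U 5 x) + h^2 * V1 (D 0 (U 0 x)) (D 1 (U 0 x)) (D 2 (U 0 x)) (D 3 (U 0 x)) (D 4 (U 0 x)) (U 0 x) (U 1 x) (U 2 x) (U 3 x) (U 4 x) (U 5 x) + h^4 * V2 (D 0 (U 0 x)) (D 1 (U 0 x)) (D 2 (U 0 x)) (D 3 (U 0 x)) (D 4 (U 0 x)) (U 0 x) (U 1 x) (U 2 x) (U 3 x) (U 4 x) (U 5 x) + h^6 * V3 (D 0 (U 0 x)) (D 1 (U 0 x)) (D 2 (U 0 x)) (D 3 (U 0 x)) (D 4 (U 0 x)) (U 0 x) (U 1 x) (U 2 x) (U 3 x) (U 4 x) (U 5 x) + h^8 * V4 (D 0 (U 0 x)) (D 1 (U 0 x)) (D 2 (U 0 x)) (D 3 (U 0 x)) (D 4 (U 0 x)) (U 0 x) (U 1 x) (U 2 x) (U 3 x) (U 4 x) (U 5 x))"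
      unfolding my by (rule MP_split)
    have mdx: "deriv (\<lambda>y. miura c h u y) x = (W0 (D 0 (U 0 x)) (D 1 (U 0 x)) (D 2 (U 0 x)) (D 3 (U 0 x)) (D 4 (U 0 x)) (U 0 x) (U 1 x) (U 2 x) (U 3 x) (U 4 x) (U 5 x) + h^2 * W1 (D 0 (U 0 x)) (D 1 (U 0 x)) (D 2 (U 0 x)) (D 3 (U 0 x)) (D 4 (U 0 x)) (U 0 x) (U 1 x) (U 2 x) (U 3 x) (U 4 x) (U 5 x) + h^4 * W2 (D 0 (U 0 x)) (D 1 (U 0 x)) (D 2 (U 0 x)) (D 3 (U 0 x)) (D 4 (U 0 x)) (U 0 x) (U 1 x) (U 2 x) (U 3 x) (U 4 x) (U 5 x) + h^6 * W3 (D 0 (U 0 x)) (D 1 (U 0 x)) (D 2 (U 0 x)) (D 3 (U 0 x)) (D 4 (U 0 x)) (U 0 x) (U 1 x) (U 2 x) (U 3 x) (U 4 x) (U 5 x) + h^8 * W4 (D 0 (U 0 x)) (D 1 (U 0 x)) (D 2 (U 0 x)) (D 3 (U 0 x)) (D 4 (U 0 x)) (U 0 x) (U 1 x) (U 2 x) (U 3 x) (U 4 x) (U 5 x))"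
      unfolding my by (rule DERIV_imp_deriv[OF dMP[where U=U and D=D, OF dU dD]])
    show ?thesis
      unfolding mt mx mdx
      by (rule final_alg) (rule ord0 ord1 ord2 ord3 ord4)+
  qed
  have cont: "isCont (\<lambda>h. T5 (D 0 (U 0 x)) (D 1 (U 0 x)) (D 2 (U 0 x)) (D 3 (U 0 x)) (D 4 (U 0 x)) (U 0 x) (U 1 x) (U 2 x) (U 3 x) (U 4 x) (U 5 x) - ((V1 (D 0 (U 0 x)) (D 1 (U 0 x)) (D 2 (U 0 x)) (D 3 (U 0 x)) (D 4 (U 0 x)) (U 0 x) (U 1 x) (U 2 x) (U 3 x) (U 4 x) (U 5 x) * W4 (D 0 (U 0 x)) (D 1 (U 0 x)) (D 2 (U 0 x)) (D 3 (U 0 x)) (D 4 (U 0 x)) (U 0 x) (U 1 x) (U 2 x) (U 3 x) (U 4 x) (U 5 x) + V2 (D 0 (U 0 x)) (D 1 (U 0 x)) (D 2 (U 0 x)) (D 3 (U 0 x)) (D 4 (U 0 x)) (U 0 x) (U 1 x) (U 2 x) (U 3 x) (U 4 x) (U 5 x) * W3 (D 0 (U 0 x)) (D 1 (U 0 x)) (D 2 (U 0 x)) (D 3 (U 0 x)) (D 4 (U 0 x)) (U 0 x) (U 1 x) (U 2 x) (U 3 x) (U 4 x) (U 5 x) + V3 (D 0 (U 0 x)) (D 1 (U 0 x)) (D 2 (U 0 x)) (D 3 (U 0 x)) (D 4 (U 0 x)) (U 0 x) (U 1 x) (U 2 x) (U 3 x) (U 4 x) (U 5 x) * W2 (D 0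 (U 0 x)) (D 1 (U 0 x)) (D 2 (U 0 x)) (D 3 (U 0 x)) (D 4 (U 0 x)) (U 0 x) (U 1 x) (U 2 x) (U 3 x) (U 4 x) (U 5 x) + V4 (D 0 (U 0 x)) (D 1 (U 0 x)) (D 2 (U 0 x)) (D 3 (U 0 x)) (D 4 (U 0 x)) (U 0 x) (U 1 x) (U 2 x) (U 3 x) (U 4 x) (U 5 x) * W1 (D 0 (U 0 x)) (D 1 (U 0 x)) (D 2 (U 0 x)) (D 3 (U 0 x)) (D 4 (U 0 x)) (U 0 x) (U 1 x) (U 2 x) (U 3 x) (U 4 x) (U 5 x)) + h^2 * (V2 (D 0 (U 0 x)) (D 1 (U 0 x)) (D 2 (U 0 x)) (D 3 (U 0 x)) (D 4 (U 0 x)) (U 0 x) (U 1 x) (U 2 x) (U 3 x) (U 4 x) (U 5 x) * W4 (D 0 (U 0 x)) (D 1 (U 0 x)) (D 2 (U 0 x)) (D 3 (U 0 x)) (D 4 (U 0 x)) (U 0 x) (U 1 x) (U 2 x) (U 3 x) (U 4 x) (U 5 x) + V3 (D 0 (U 0 x)) (D 1 (U 0 x)) (D 2 (U 0 x)) (D 3 (U 0 x)) (D 4 (U 0 x)) (U 0 x) (U 1 x) (U 2 x) (U 3 x) (U 4 x) (U 5 x) * W3 (D 0 (U 0 x)) (D 1 (U 0 x)) (D 2 (U 0 x)) (D 3 (U 0 x)) (D 4 (U 0 x)) (U 0 x) (U 1 x) (U 2 x) (U 3 x) (U 4 x) (U 5 x) + V4 (D 0 (U 0 x)) (D 1 (U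 0 x)) (D 2 (U 0 x)) (D 3 (U 0 x)) (D 4 (U 0 x)) (U 0 x) (U 1 x) (U 2 x) (U 3 x) (U 4 x) (U 5 x) * W2 (D 0 (U 0 x)) (D 1 (U 0 x)) (D 2 (U 0 x)) (D 3 (U 0 x)) (D 4 (U 0 x)) (U 0 x) (U 1 x) (U 2 x) (U 3 x) (U 4 x) (U 5 x)) + h^4 * (V3 (D 0 (U 0 x)) (D 1 (U 0 x)) (D 2 (U 0 x)) (D 3 (U 0 x)) (D 4 (U 0 x)) (U 0 x) (U 1 x) (U 2 x) (U 3 x) (U 4 x) (U 5 x) * W4 (D 0 (U 0 x)) (D 1 (U 0 x)) (D 2 (U 0 x)) (D 3 (U 0 x)) (D 4 (U 0 x)) (U 0 x) (U 1 x) (U 2 x) (U 3 x) (U 4 x) (U 5 x) + V4 (D 0 (U 0 x)) (D 1 (U 0 x)) (D 2 (U 0 x)) (D 3 (U 0 x)) (D 4 (U 0 x)) (U 0 x) (U 1 x) (U 2 x) (U 3 x) (U 4 x) (U 5 x) * W3 (D 0 (U 0 x)) (D 1 (U 0 x)) (D 2 (U 0 x)) (D 3 (U 0 x)) (D 4 (U 0 x)) (U 0 x) (U 1 x) (U 2 x) (U 3 x) (U 4 x) (U 5 x)) + h^6 * (V4 (D 0 (U 0 x)) (D 1 (U 0 x)) (D 2 (U 0 x)) (D 3 (U 0 x)) (D 4 (U 0 x)) (U 0 x) (U 1 x) (U 2 x) (U 3 x) (U 4 x) (U 5 x) * W4 (D 0 (U 0 x)) (D 1 (U 0 x)) (D 2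 (U 0 x)) (D 3 (U 0 x)) (D 4 (U 0 x)) (U 0 x) (U 1 x) (U 2 x) (U 3 x) (U 4 x) (U 5 x)))) 0"
    by (intro continuous_intros)
  show ?thesis
    unfolding key by (rule bigo_h10[OF cont])
qed

end
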